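(* For every integer $N\ge1$, \[ E\sup_{0\le t\le1}|X_N(t)-\hat X_N(t)|^2\le 136L^8N^{-1/2}. \]
   Context: Fix an integer $d\ge1$ and $L\ge1$. Let $\sigma:\mathbb R^d\to\mathbb R^{d\times d}$, $b:\mathbb R^d\to\mathbb R^d$ satisfy $|\sigma(x)|\le L$, $|b(x)|\le L$, $|\sigma(x)-\sigma(y)|\le L|x-y|$, $|b(x)-b(y)|\le L|x-y|$ for all $x,y$. Let $\xi(n)$, $n\ge1$, be i.i.d. random vectors in $\mathbb R^d$ with $E\xi(1)=0$, $E(\xi_i(1)\xi_j(1))=\delta_{ij}$, $|\xi(1)|\le L$ a.s. Fix $x_0$. Define $X_N(0)=x_0$, $X_N((n+1)/N)=X_N(n/N)+N^{-1/2}\sigma(X_N(n/N))\xi(n+1)+N^{-1}b(X_N(n/N))$ for $0\le n\le N-1$, and $X_N(t)=X_N(n/N)$ for $n/N\le t<(n+1)/N$. Let $[\cdot]$ be the integer part, $n_k=k[N^{1/4}]$, $k_N=[N/[N^{1/4}]]$, and $k_N(t)=\max\{k:\ n_k\le Nt\}$. Define for $t\in[0,1]$ \[ \hat X_N(t)=x_0+N^{-1/2}\sum_{0\le k\le k_N(t)}\Big(\sigma(X_N(n_k/N))\sum_{n_k<l\le n_{k+1}\wedge[Nt]}\xi(l)+N^{-1/2}b(X_N(n_k/N))\,(n_{k+1}\wedge[Nt]-n_k)\Big). \] *)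

theory Defs
  imports "HOL-Probability.Probability"
begin

text \<open>Grid values of the Euler-type scheme: XN ... N n w is X_N(n/N).\<close>
primrec XN :: "(real^'d \<Rightarrow> real^'d^'d) \<Rightarrow> (real^'d \<Rightarrow> real^'d) \<Rightarrow> (nat \<Rightarrow> 'a \<Rightarrow> real^'d)
    \<Rightarrow> real^'d \<Rightarrow> nat \<Rightarrow> nat \<Rightarrow> 'a \<Rightarrow> real^'d" where
  "XN \<sigma> b \<xi> x0 N 0 w = x0"
| "XN \<sigma> b \<xi> x0 N (Suc n) w =
     XN \<sigma> b \<xi> x0 N n w
     + inverse (sqrt (real N)) *\<^sub>R (\<sigma> (XN \<sigma> b \<xi> x0 N n w) *v \<xi> (Suc n) w)
     + inverse (real N) *\<^sub>R b (XN \<sigma> b \<xi> x0 N n w)"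

definition Xt :: "(real^'d \<Rightarrow> real^'d^'d) \<Rightarrow> (real^'d \<Rightarrow> real^'d) \<Rightarrow> (nat \<Rightarrow> 'a \<Rightarrow> real^'d)
    \<Rightarrow> real^'d \<Rightarrow> nat \<Rightarrow> real \<Rightarrow> 'a \<Rightarrow> real^'d" where
  "Xt \<sigma> b \<xi> x0 N t w = XN \<sigma> b \<xi> x0 N (nat \<lfloor>real N * t\<rfloor>) w"

definition blk :: "nat \<Rightarrow> nat" where
  "blk N = nat \<lfloor>root 4 (real N)\<rfloor>"

definition nk :: "nat \<Rightarrow> nat \<Rightarrow> nat" where
  "nk N k = k * blk N"

definition kNt :: "nat \<Rightarrow> real \<Rightarrow> nat" where
  "kNt N t = Max {k. real (nk N k) \<le> real N * t}"

definition Xhat :: "(real^'d \<Rightarrow> real^'d^'d) \<Rightarrow> (real^'d \<Rightarrow> real^'d) \<Rightarrow> (nat \<Rightarrow> 'a \<Rightarrow> real^'d)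
    \<Rightarrow> real^'d \<Rightarrow> nat \<Rightarrow> real \<Rightarrow> 'a \<Rightarrow> real^'d" where
  "Xhat \<sigma> b \<xi> x0 N t w = x0 + inverse (sqrt (real N)) *\<^sub>R
     (\<Sum>k\<in>{0..kNt N t}.
        \<sigma> (XN \<sigma> b \<xi> x0 N (nk N k) w)
          *v (\<Sum>l\<in>{nk N k<..min (nk N (Suc k)) (nat \<lfloor>real N * t\<rfloor>)}. \<xi> l w)
        + inverse (sqrt (real N)) *\<^sub>R
            ((real (min (nk N (Suc k)) (nat \<lfloor>real N * t\<rfloor>)) - real (nk N k))
              *\<^sub>R b (XN \<sigma> b \<xi> x0 N (nk N k) w)))"

end

theory Submission
  imports Defs
begin


lemma norm_mv: fixes A :: "real^'n^'m" shows "norm (A *v x) \<le> norm A * norm x"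
proof -
  have c: "\<bar>(A *v x) $ i\<bar> \<le> norm (A $ i) * norm x" for i
  proof -
    have "(A *v x) $ i = inner (A $ i) x"
      by (simp add: matrix_vector_mult_def inner_vec_def)
    thus ?thesis using Cauchy_Schwarz_ineq2 by simp
  qed
  have "norm (A *v x) = L2_set (\<lambda>i. \<bar>(A *v x) $ i\<bar>) UNIV" by (simp add: norm_vec_def)
  also have "\<dots> \<le> L2_set (\<lambda>i. norm (A $ i) * norm x) UNIV"
    by (rule L2_set_mono) (use c in auto)
  also have "\<dots> = norm x * L2_set (\<lambda>i. norm (A $ i)) UNIV"
    by (subst L2_set_right_distrib) (simp_all add: mult.commute)
  also have "\<dots> = norm A * norm x"
    by (simp add: norm_vec_def[of A])
  finally show ?thesis .
qed

definition mxs :: "(nat \<Rightarrow> 'v::real_normed_vector) \<Rightarrow> nat \<Rightarrow> real" where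
  "mxs M n = Max ((\<lambda>k. norm (M k)) ` {..n})"

lemma mxs_0[simp]: "mxs M 0 = norm (M 0)" by (simp add: mxs_def)
lemma mxs_Suc: "mxs M (Suc n) = max (mxs M n) (norm (M (Suc n)))"
  unfolding mxs_def by (simp add: atMost_Suc max.commute)
lemma mxs_ge: "k \<le> n \<Longrightarrow> norm (M k) \<le> mxs M n"
  unfolding mxs_def by (intro Max_ge) auto
lemma mxs_nonneg: "0 \<le> mxs M n"
  using mxs_ge[of 0 n M] norm_ge_zero[of "M 0"] by linarith

lemma inner_sgn_self: fixes x :: "'v::real_inner" shows "inner (sgn x) x = norm x"
  by (cases "x = 0") (simp_all add: sgn_div_norm power2_norm_eq_inner[symmetric] power2_eq_square)

lemma inner_sgn_le: fixes x :: "'v::real_inner" shows "inner (sgn x) y \<le> norm y"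
proof -
  have "inner (sgn x) y \<le> norm (sgn x) * norm y" by (rule Cauchy_Schwarz_ineq2[THEN abs_le_D1])
  also have "\<dots> \<le> norm y" by (cases "x = 0") (simp_all add: norm_sgn)
  finally show ?thesis .
qed

lemma doob_path_inv:
  fixes M :: "nat \<Rightarrow> 'v::real_inner"
  assumes "M 0 = 0"
  shows "(\<Sum>j<n. mxs M j * inner (sgn (M j)) (M (Suc j) - M j)) \<le> norm (M n) * mxs M n - (mxs M n)^2 / 2"
proof (induction n)
  case 0 thus ?case using assms by simp
next
  case (Suc n)
  let ?m = "mxs M n" and ?a = "norm (M (Suc n))"
  have "(\<Sum>j<Suc n. mxs M j * inner (sgn (M j)) (M (Suc j) - M j))
      \<le> norm (M n) * ?m - ?m^2/2 + ?m * inner (sgn (M n)) (M (Suc n) - M n)"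
    using Suc by simp
  also have "\<dots> = ?m * inner (sgn (M n)) (M (Suc n)) - ?m^2/2"
    by (simp add: inner_diff_right inner_sgn_self algebra_simps)
  also have "\<dots> \<le> ?m * ?a - ?m^2/2"
    using inner_sgn_le[of "M n" "M (Suc n)"] mxs_nonneg[of M n] by (simp add: mult_left_mono)
  also have "\<dots> \<le> ?a * max ?m ?a - (max ?m ?a)^2/2"
  proof (cases "?a \<le> ?m")
    case True thus ?thesis by (simp add: max_def mult.commute)
  next
    case False
    have "0 \<le> (?a - ?m)^2/2" by simp
    thus ?thesis using False by (simp add: max_def power2_eq_square algebra_simps)
  qed
  finally show ?case by (simp add: mxs_Suc)
qed

lemma norm_sq_telescope:
  fixes M :: "nat \<Rightarrow> 'v::real_inner"
  assumes "M 0 = 0"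
  shows "(norm (M n))^2 = (\<Sum>j<n. 2 * inner (M j) (M (Suc j) - M j) + (norm (M (Suc j) - M j))^2)"
proof (induction n)
  case 0 thus ?case using assms by simp
next
  case (Suc n)
  have "(norm (M (Suc n)))^2 = (norm (M n + (M (Suc n) - M n)))^2" by simp
  also have "\<dots> = (norm (M n))^2 + 2 * inner (M n) (M (Suc n) - M n) + (norm (M (Suc n) - M n))^2"
    by (simp add: power2_norm_eq_inner inner_diff_left inner_diff_right inner_add_left inner_add_right inner_commute algebra_simps)
  finally show ?case using Suc by simp
qed

lemma doob_path:
  fixes M :: "nat \<Rightarrow> 'v::real_inner"
  assumes "M 0 = 0"
  shows "(mxs M n)^2 \<le> (\<Sum>j<n. 4 * (norm (M (Suc j) - M j))^2
            + inner (8 *\<^sub>R M j - (4 * mxs M j) *\<^sub>R sgn (M j)) (M (Suc j) - M j))"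
proof -
  let ?S = "\<Sum>j<n. mxs M j * inner (sgn (M j)) (M (Suc j) - M j)"
  let ?m = "mxs M n" and ?a = "norm (M n)"
  have inv: "?S \<le> ?a * ?m - ?m^2/2" by (rule doob_path_inv[of M n, OF assms])
  have "?m^2 \<le> 4 * ?a^2 - 4 * ?S"
  proof -
    have "0 \<le> (2 * ?a - ?m)^2" by simp
    thus ?thesis using inv by (simp add: power2_eq_square algebra_simps)
  qed
  also have "4 * ?a^2 - 4 * ?S = (\<Sum>j<n. 4 * (norm (M (Suc j) - M j))^2
            + inner (8 *\<^sub>R M j - (4 * mxs M j) *\<^sub>R sgn (M j)) (M (Suc j) - M j))"
    unfolding norm_sq_telescope[of M n, OF assms]
    by (simp add: sum_distrib_left sum_subtractf[symmetric] sum.distrib[symmetric] inner_diff_left algebra_simps)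
  finally show ?thesis .
qed



lemma XN_cong:
  assumes "\<And>l. l \<in> {1..n} \<Longrightarrow> \<xi> l w = \<xi>' l w'"
  shows "XN \<sigma> b \<xi> x0 N n w = XN \<sigma> b \<xi>' x0 N n w'"
  using assms by (induction n) auto

lemma borel_measurable_mv[measurable (raw)]:
  fixes f :: "'a \<Rightarrow> real^'n^'m" and g :: "'a \<Rightarrow> real^'n"
  assumes "f \<in> borel_measurable S" "g \<in> borel_measurable S"
  shows "(\<lambda>x. f x *v g x) \<in> borel_measurable S"
  using assms by (rule borel_measurable_continuous_Pair)
    (unfold matrix_vector_mult_def, intro continuous_intros continuous_on_vec_lambda)

lemma XN_measurable:
  assumes \<sigma>: "\<sigma> \<in> borel_measurable borel" and b: "b \<in> borel_measurable borel"
    and \<xi>: "\<And>l. l \<ge> 1 \<Longrightarrow> \<xi> l \<in> borel_measurable S"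
  shows "(\<lambda>w. XN \<sigma> b \<xi> x0 N n w) \<in> borel_measurable S"
proof (induction n)
  case 0 thus ?case by simp
next
  case (Suc n)
  have m\<sigma>: "(\<lambda>w. \<sigma> (XN \<sigma> b \<xi> x0 N n w)) \<in> borel_measurable S"
    using measurable_compose[OF Suc \<sigma>] .
  have mb: "(\<lambda>w. b (XN \<sigma> b \<xi> x0 N n w)) \<in> borel_measurable S"
    using measurable_compose[OF Suc b] .
  have "\<xi> (Suc n) \<in> borel_measurable S" using \<xi> by simp
  then show ?case using Suc m\<sigma> mb by simp
qed

lemma XN_sum:
  "XN \<sigma> b \<xi> x0 N n w = x0 + (\<Sum>j<n. inverse (sqrt (real N)) *\<^sub>R (\<sigma> (XN \<sigma> b \<xi> x0 N j w) *v \<xi> (Suc j) w)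
      + inverse (real N) *\<^sub>R b (XN \<sigma> b \<xi> x0 N j w))"
  by (induction n) (simp_all add: algebra_simps)

lemma blk_ge1: "N \<ge> 1 \<Longrightarrow> blk N \<ge> 1"
proof -
  assume "N \<ge> 1"
  hence "1 \<le> root 4 (real N)" by simp
  hence "1 \<le> \<lfloor>root 4 (real N)\<rfloor>" by linarith
  thus ?thesis unfolding blk_def by linarith
qed

lemma blk_sq: "real (blk N) ^ 2 \<le> sqrt (real N)"
proof -
  have "0 \<le> root 4 (real N)" by simp
  hence "real (blk N) \<le> root 4 (real N)" unfolding blk_def by simp
  hence "real (blk N) ^ 2 \<le> root 4 (real N) ^ 2" by (intro power_mono) auto
  also have "root 4 (real N) ^ 2 = sqrt (real N)"
  proof -
    have "root 4 (real N) ^ 2 = root 4 (real N ^ 2)"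
      by (simp add: real_root_power)
    also have "\<dots> = sqrt (real N)"
      using real_root_mult_exp[of 2 2 "real N ^ 2"] real_root_power_cancel[of 2 "real N"] by (simp add: sqrt_def)
    finally show ?thesis .
  qed
  finally show ?thesis .
qed

lemma kNt_eq:
  assumes "N \<ge> 1" "0 \<le> t"
  shows "kNt N t = nat \<lfloor>real N * t\<rfloor> div blk N"
proof -
  let ?B = "blk N" and ?n = "nat \<lfloor>real N * t\<rfloor>"
  have B: "?B \<ge> 1" using blk_ge1 assms by simp
  have eq: "{k. real (nk N k) \<le> real N * t} = {k. k * ?B \<le> ?n}"
  proof -
    have "real (k * ?B) \<le> real N * t \<longleftrightarrow> k * ?B \<le> ?n" for k
    proof -
      have "0 \<le> real N * t" using assms by simp
      thus ?thesis by linarith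
    qed
    thus ?thesis by (auto simp: nk_def)
  qed
  show ?thesis unfolding kNt_def eq
  proof (rule Max_eqI)
    show "finite {k. k * ?B \<le> ?n}"
    proof (rule finite_subset[of _ "{..?n}"])
      show "{k. k * ?B \<le> ?n} \<subseteq> {..?n}"
      proof
        fix k assume "k \<in> {k. k * ?B \<le> ?n}"
        moreover have "k \<le> k * ?B" using B by simp
        ultimately show "k \<in> {..?n}" by (meson atMost_iff le_trans mem_Collect_eq)
      qed
    qed simp
    show "y \<le> ?n div ?B" if "y \<in> {k. k * ?B \<le> ?n}" for y
      using that B by (simp add: less_eq_div_iff_mult_less_eq)
    show "?n div ?B \<in> {k. k * ?B \<le> ?n}" by (simp add: div_times_less_eq_dividend)
  qed
qed



lemma block_sum:
  fixes g :: "nat \<Rightarrow> nat \<Rightarrow> 'v::comm_monoid_add"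
  assumes B: "B \<ge> 1"
  shows "(\<Sum>k\<in>{0..n div B}. \<Sum>l\<in>{k*B<..min (Suc k * B) n}. g k l) = (\<Sum>j<n. g (j div B) (Suc j))"
proof -
  have "(\<Sum>j<n. g (j div B) (Suc j)) = (\<Sum>l\<in>{1..n}. g ((l - 1) div B) l)"
  proof -
    have "(\<Sum>l\<in>{1..n}. g ((l - 1) div B) l) = (\<Sum>j\<in>{0..<n}. g ((Suc j - 1) div B) (Suc j))"
      by (rule sum.reindex_bij_witness[where i=Suc and j="\<lambda>l. l - 1"]) auto
    thus ?thesis by (simp add: atLeast0LessThan)
  qed
  also have "\<dots> = (\<Sum>k\<in>{0..n div B}. \<Sum>l\<in>{x. x \<in> {1..n} \<and> (x - 1) div B = k}. g ((l - 1) div B) l)"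
    by (rule sum.group[symmetric]) (auto intro!: div_le_mono)
  also have "\<dots> = (\<Sum>k\<in>{0..n div B}. \<Sum>l\<in>{k*B<..min (Suc k * B) n}. g k l)"
  proof (rule sum.cong[OF refl])
    fix k assume k: "k \<in> {0..n div B}"
    have S: "{x. x \<in> {1..n} \<and> (x - 1) div B = k} = {k*B<..min (Suc k * B) n}"
    proof (intro set_eqI iffI)
      fix x assume "x \<in> {x. x \<in> {1..n} \<and> (x - 1) div B = k}"
      hence x: "1 \<le> x" "x \<le> n" "(x - 1) div B = k" by auto
      have "k * B \<le> x - 1" using x(3) div_times_less_eq_dividend[of "x - 1" B] by simp
      moreover have "x - 1 < Suc k * B"
      proof -
        have "x - 1 < B + (x - 1) div B * B" using B by (intro dividend_less_div_times) simp
        thus ?thesis using x(3) by simp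
      qed
      ultimately have "k * B < x" "x \<le> Suc k * B" using x(1) by linarith+
      thus "x \<in> {k*B<..min (Suc k * B) n}" using x(2) by simp
    next
      fix x assume "x \<in> {k*B<..min (Suc k * B) n}"
      hence x: "k * B < x" "x \<le> Suc k * B" "x \<le> n" by auto
      have "(x - 1) div B = k"
      proof (rule div_nat_eqI)
        show "B * k \<le> x - 1" using x by (simp add: mult.commute)
        show "x - 1 < B * Suc k" using x B by (simp add: mult.commute)
      qed
      thus "x \<in> {x. x \<in> {1..n} \<and> (x - 1) div B = k}" using x by auto
    qed
    show "(\<Sum>l\<in>{x. x \<in> {1..n} \<and> (x - 1) div B = k}. g ((l - 1) div B) l) = (\<Sum>l\<in>{k*B<..min (Suc k * B) n}. g k l)"
      unfolding S
    proof (rule sum.cong[OF refl])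
      fix l assume "l \<in> {k*B<..min (Suc k * B) n}"
      hence "l \<in> {x. x \<in> {1..n} \<and> (x - 1) div B = k}" using S by simp
      thus "g ((l - 1) div B) l = g k l" by simp
    qed
  qed
  finally show ?thesis by simp
qed

lemma mv_sum: fixes A :: "real^'n^'m" shows "A *v sum f S = (\<Sum>x\<in>S. A *v f x)"
proof (cases "finite S")
  case True thus ?thesis by (induction S rule: finite_induct) (simp_all add: matrix_vector_right_distrib)
qed simp

lemma Xhat_eq:
  assumes "N \<ge> 1" "0 \<le> t"
  shows "Xhat \<sigma> b \<xi> x0 N t w = x0 + inverse (sqrt (real N)) *\<^sub>R
    (\<Sum>j<nat \<lfloor>real N * t\<rfloor>. \<sigma> (XN \<sigma> b \<xi> x0 N (j div blk N * blk N) w) *v \<xi> (Suc j) w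
       + inverse (sqrt (real N)) *\<^sub>R b (XN \<sigma> b \<xi> x0 N (j div blk N * blk N) w))"
proof -
  let ?B = "blk N" and ?n = "nat \<lfloor>real N * t\<rfloor>" and ?s = "inverse (sqrt (real N))"
  have B: "?B \<ge> 1" using blk_ge1 assms by simp
  define g where "g k l = \<sigma> (XN \<sigma> b \<xi> x0 N (k * ?B) w) *v \<xi> l w + ?s *\<^sub>R b (XN \<sigma> b \<xi> x0 N (k * ?B) w)" for k l
  have "(\<Sum>k\<in>{0..kNt N t}.
        \<sigma> (XN \<sigma> b \<xi> x0 N (nk N k) w)
          *v (\<Sum>l\<in>{nk N k<..min (nk N (Suc k)) ?n}. \<xi> l w)
        + ?s *\<^sub>R
            ((real (min (nk N (Suc k)) ?n) - real (nk N k))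
              *\<^sub>R b (XN \<sigma> b \<xi> x0 N (nk N k) w)))
      = (\<Sum>k\<in>{0..?n div ?B}. \<Sum>l\<in>{k*?B<..min (Suc k * ?B) ?n}. g k l)"
    unfolding kNt_eq[OF assms]
  proof (rule sum.cong[OF refl])
    fix k assume k: "k \<in> {0..?n div ?B}"
    have "k * ?B \<le> ?n div ?B * ?B" using k by simp
    also have "\<dots> \<le> ?n" by (rule div_times_less_eq_dividend)
    finally have kn: "k * ?B \<le> ?n" .
    have km: "k * ?B \<le> min (Suc k * ?B) ?n" using kn by simp
    have c: "real (min (Suc k * ?B) ?n) - real (k * ?B) = real (card {k*?B<..min (Suc k * ?B) ?n})"
      using km by simp
    show "\<sigma> (XN \<sigma> b \<xi> x0 N (nk N k) w)
          *v (\<Sum>l\<in>{nk N k<..min (nk N (Suc k)) ?n}. \<xi> l w)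
        + ?s *\<^sub>R
            ((real (min (nk N (Suc k)) ?n) - real (nk N k))
              *\<^sub>R b (XN \<sigma> b \<xi> x0 N (nk N k) w))
        = (\<Sum>l\<in>{k*?B<..min (Suc k * ?B) ?n}. g k l)"
      unfolding g_def nk_def sum.distrib mv_sum sum_constant_scaleR c[symmetric] by simp
  qed
  also have "\<dots> = (\<Sum>j<?n. g (j div ?B) (Suc j))" by (rule block_sum[OF B])
  finally show ?thesis unfolding Xhat_def g_def by simp
qed



locale mdl =
  fixes \<sigma> :: "real^'d \<Rightarrow> real^'d^'d" and b :: "real^'d \<Rightarrow> real^'d" and L :: real
    and x0 :: "real^'d" and N :: nat
  assumes L1: "L \<ge> 1"
    and \<sigma>bd: "\<And>x. norm (\<sigma> x) \<le> L" and bbd: "\<And>x. norm (b x) \<le> L"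
    and \<sigma>lip: "\<And>x y. norm (\<sigma> x - \<sigma> y) \<le> L * norm (x - y)"
    and blip: "\<And>x y. norm (b x - b y) \<le> L * norm (x - y)"
    and N1: "N \<ge> 1"
begin

definition "s = inverse (sqrt (real N))"
definition "tr v = (if norm v \<le> L then v else 0)"
definition "Xh f n = XN \<sigma> b (\<lambda>l f. tr (f l)) x0 N n f"
definition "kap j = j div blk N * blk N"
definition "Af f j = \<sigma> (Xh f j) - \<sigma> (Xh f (kap j))"
definition "Dl f j = Af f j *v tr (f (Suc j))"
definition "Mm f n = (\<Sum>j<n. Dl f j)"
definition "Vv f j = 8 *\<^sub>R Mm f j - (4 * mxs (Mm f) j) *\<^sub>R sgn (Mm f j)"
definition "Bd f n = (\<Sum>j<n. b (Xh f j) - b (Xh f (kap j)))"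
definition "Fi f j i = (\<Sum>k\<in>UNIV. Vv f j $ k * Af f j $ k $ i)"

lemma s_pos: "0 < s" and s_le1: "s \<le> 1" and s_sq: "s^2 = inverse (real N)"
  and s_N: "s^2 * real N = 1" and s_sqrtN: "s * sqrt (real N) = 1"
proof -
  have "1 \<le> sqrt (real N)" using N1 by simp
  thus "0 < s" "s \<le> 1" unfolding s_def by (auto intro: inverse_le_1_iff[THEN iffD2])
  show "s^2 = inverse (real N)" "s^2 * real N = 1" "s * sqrt (real N) = 1"
    using N1 by (auto simp: s_def power_inverse)
qed

lemma kap_le: "kap j \<le> j" unfolding kap_def by (rule div_times_less_eq_dividend)
lemma kap_dist: "j - kap j < blk N"
proof -
  have "j - kap j = j mod blk N" unfolding kap_def by (simp add: minus_div_mult_eq_mod)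
  also have "\<dots> < blk N" using blk_ge1[OF N1] by simp
  finally show ?thesis .
qed

lemma tr_bd: "norm (tr v) \<le> L" using L1 by (simp add: tr_def)

lemma \<sigma>_meas: "\<sigma> \<in> borel_measurable borel"
proof (rule borel_measurable_continuous_onI, rule lipschitz_on_continuous_on)
  show "L-lipschitz_on UNIV \<sigma>" using \<sigma>lip L1 by (intro lipschitz_onI) (auto simp: dist_norm)
qed
lemma b_meas: "b \<in> borel_measurable borel"
proof (rule borel_measurable_continuous_onI, rule lipschitz_on_continuous_on)
  show "L-lipschitz_on UNIV b" using blip L1 by (intro lipschitz_onI) (auto simp: dist_norm)
qed
lemma tr_meas[measurable]: "tr \<in> borel_measurable borel"
  unfolding tr_def by measurable

end

context mdl begin

lemma Xh_cong: "(\<And>l. l \<in> {1..n} \<Longrightarrow> f l = g l) \<Longrightarrow> Xh f n = Xh g n"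
  unfolding Xh_def by (rule XN_cong) auto

lemma Af_cong: assumes h: "\<And>l. l \<in> {1..j} \<Longrightarrow> f l = g l" shows "Af f j = Af g j"
proof -
  have "Xh f j = Xh g j" by (rule Xh_cong) (use h in auto)
  moreover have "Xh f (kap j) = Xh g (kap j)" using kap_le[of j] by (intro Xh_cong h) auto
  ultimately show ?thesis unfolding Af_def by simp
qed

lemma Mm_cong: assumes h: "\<And>l. l \<in> {1..n} \<Longrightarrow> f l = g l" shows "Mm f n = Mm g n"
proof -
  have "Dl f j = Dl g j" if j: "j < n" for j
  proof -
    have "Af f j = Af g j" by (rule Af_cong) (use j h in auto)
    moreover have "f (Suc j) = g (Suc j)" by (rule h) (use j in auto)
    ultimately show ?thesis unfolding Dl_def by simp
  qed
  thus ?thesis unfolding Mm_def by (intro sum.cong) auto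
qed

lemma Vv_cong: "(\<And>l. l \<in> {1..j} \<Longrightarrow> f l = g l) \<Longrightarrow> Vv f j = Vv g j"
proof -
  assume h: "\<And>l. l \<in> {1..j} \<Longrightarrow> f l = g l"
  have e: "Mm f k = Mm g k" if "k \<le> j" for k by (rule Mm_cong) (use that h in auto)
  have "(\<lambda>k. norm (Mm f k)) ` {..j} = (\<lambda>k. norm (Mm g k)) ` {..j}"
    by (rule image_cong) (use e in auto)
  hence "mxs (Mm f) j = mxs (Mm g) j" unfolding mxs_def by simp
  thus ?thesis unfolding Vv_def using e[of j] by simp
qed

lemma Fi_cong: "(\<And>l. l \<in> {1..j} \<Longrightarrow> f l = g l) \<Longrightarrow> Fi f j i = Fi g j i"
proof -
  assume h: "\<And>l. l \<in> {1..j} \<Longrightarrow> f l = g l"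
  have "Vv f j = Vv g j" by (rule Vv_cong) (use h in auto)
  moreover have "Af f j = Af g j" by (rule Af_cong) (use h in auto)
  ultimately show ?thesis unfolding Fi_def by simp
qed

lemma inner_split: "inner (Vv f j) (Dl f j) = (\<Sum>i\<in>UNIV. Fi f j i * tr (f (Suc j)) $ i)"
proof -
  have "inner (Vv f j) (Dl f j) = (\<Sum>k\<in>UNIV. \<Sum>i\<in>UNIV. Vv f j $ k * (Af f j $ k $ i * tr (f (Suc j)) $ i))"
    unfolding Dl_def inner_vec_def matrix_vector_mult_def by (simp add: sum_distrib_left)
  also have "\<dots> = (\<Sum>i\<in>UNIV. \<Sum>k\<in>UNIV. Vv f j $ k * (Af f j $ k $ i * tr (f (Suc j)) $ i))"
    by (rule sum.swap)
  also have "\<dots> = (\<Sum>i\<in>UNIV. Fi f j i * tr (f (Suc j)) $ i)"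
    unfolding Fi_def by (simp add: sum_distrib_right mult.assoc)
  finally show ?thesis .
qed

lemma bm_vec_nth[measurable (raw)]:
  fixes f :: "'c \<Rightarrow> (real^'n)^'m"
  shows "f \<in> borel_measurable S' \<Longrightarrow> (\<lambda>x. f x $ k) \<in> borel_measurable S'"
  by (erule measurable_compose, rule borel_measurable_continuous_onI)
    (intro continuous_intros)

lemma bm_vec_nth'[measurable (raw)]:
  fixes f :: "'c \<Rightarrow> real^'m"
  shows "f \<in> borel_measurable S' \<Longrightarrow> (\<lambda>x. f x $ k) \<in> borel_measurable S'"
  by (erule measurable_compose, rule borel_measurable_nth)

context
  fixes S :: "'b measure" and H :: "'b \<Rightarrow> nat \<Rightarrow> real^'d"
  assumes H: "\<And>l. l \<ge> 1 \<Longrightarrow> (\<lambda>x. H x l) \<in> borel_measurable S"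
begin

lemma Xh_meas[measurable]: "(\<lambda>x. Xh (H x) n) \<in> borel_measurable S"
proof -
  have "(\<lambda>x. XN \<sigma> b (\<lambda>l x. tr (H x l)) x0 N n x) \<in> borel_measurable S"
    using \<sigma>_meas b_meas by (rule XN_measurable) (use H in measurable)
  moreover have "Xh (H x) n = XN \<sigma> b (\<lambda>l x. tr (H x l)) x0 N n x" for x
    unfolding Xh_def by (rule XN_cong) simp
  ultimately show ?thesis by simp
qed

lemma Af_meas[measurable]: "(\<lambda>x. Af (H x) j) \<in> borel_measurable S"
  unfolding Af_def using \<sigma>_meas by measurable

lemma Dl_meas[measurable]: "(\<lambda>x. Dl (H x) j) \<in> borel_measurable S"
proof -
  have "(\<lambda>x. H x (Suc j)) \<in> borel_measurable S" using H by simp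
  thus ?thesis unfolding Dl_def by measurable
qed

lemma Mm_meas[measurable]: "(\<lambda>x. Mm (H x) n) \<in> borel_measurable S"
  unfolding Mm_def by measurable

lemma mxs_meas[measurable]: "(\<lambda>x. mxs (Mm (H x)) n) \<in> borel_measurable S"
  by (induction n) (simp_all add: mxs_Suc)

lemma Vv_meas[measurable]: "(\<lambda>x. Vv (H x) j) \<in> borel_measurable S"
  unfolding Vv_def by measurable

lemma Fi_meas[measurable]: "(\<lambda>x. Fi (H x) j i) \<in> borel_measurable S"
  unfolding Fi_def by measurable

lemma innerVD_meas[measurable]: "(\<lambda>x. inner (Vv (H x) j) (Dl (H x) j)) \<in> borel_measurable S"
  by measurable

end

end

context mdl begin

definition "\<delta> = 2 * real (blk N) * s * L^2"

lemma Af_bd2: "norm (Af f j) \<le> 2 * L"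
  unfolding Af_def using norm_triangle_ineq4[of "\<sigma> (Xh f j)" "\<sigma> (Xh f (kap j))"] \<sigma>bd[of "Xh f j"] \<sigma>bd[of "Xh f (kap j)"]
  by linarith

lemma Dl_bd2: "norm (Dl f j) \<le> 2 * L * L"
proof -
  have "norm (Dl f j) \<le> norm (Af f j) * norm (tr (f (Suc j)))" unfolding Dl_def by (rule norm_mv)
  also have "\<dots> \<le> 2 * L * L" using Af_bd2 tr_bd L1 by (intro mult_mono) auto
  finally show ?thesis .
qed

lemma Mm_bd2: "norm (Mm f n) \<le> real n * (2 * L * L)"
proof -
  have "norm (Mm f n) \<le> (\<Sum>j<n. norm (Dl f j))" unfolding Mm_def by (rule norm_sum)
  also have "\<dots> \<le> (\<Sum>j<n. 2 * L * L)" by (intro sum_mono Dl_bd2)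
  finally show ?thesis by simp
qed

lemma mxs_bd2: "mxs (Mm f) n \<le> real n * (2 * L * L)"
  unfolding mxs_def
proof (rule Max.boundedI)
  fix y assume "y \<in> (\<lambda>k. norm (Mm f k)) ` {..n}"
  then obtain k where "k \<le> n" "y = norm (Mm f k)" by auto
  moreover have "real k * (2 * L * L) \<le> real n * (2 * L * L)" using \<open>k \<le> n\<close> L1 by (intro mult_right_mono) auto
  ultimately show "y \<le> real n * (2 * L * L)" using Mm_bd2[of f k] by linarith
qed auto

lemma Vv_bd: "norm (Vv f j) \<le> 12 * real j * (2 * L * L)"
proof -
  have "norm (Vv f j) \<le> norm (8 *\<^sub>R Mm f j) + norm ((4 * mxs (Mm f) j) *\<^sub>R sgn (Mm f j))"
    unfolding Vv_def by (rule norm_triangle_ineq4)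
  also have "\<dots> \<le> 8 * (real j * (2 * L * L)) + 4 * (real j * (2 * L * L))"
  proof (rule add_mono)
    show "norm (8 *\<^sub>R Mm f j) \<le> 8 * (real j * (2 * L * L))" using Mm_bd2[of f j] by (simp only: norm_scaleR)
    have "norm ((4 * mxs (Mm f) j) *\<^sub>R sgn (Mm f j)) \<le> 4 * mxs (Mm f) j * 1"
      using mxs_nonneg[of "Mm f" j] by (simp add: norm_sgn)
    also have "\<dots> \<le> 4 * (real j * (2 * L * L))" using mxs_bd2[of f j] by (simp add: algebra_simps)
    finally show "norm ((4 * mxs (Mm f) j) *\<^sub>R sgn (Mm f j)) \<le> 4 * (real j * (2 * L * L))" .
  qed
  finally show ?thesis by (simp add: algebra_simps)
qed

lemma Fi_bd: "\<bar>Fi f j i\<bar> \<le> real CARD('d) * ((12 * real j * (2 * L * L)) * (2 * L))"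
proof -
  have "\<bar>Fi f j i\<bar> \<le> (\<Sum>k\<in>UNIV. \<bar>Vv f j $ k * Af f j $ k $ i\<bar>)" unfolding Fi_def by (rule sum_abs)
  also have "\<dots> \<le> (\<Sum>k\<in>(UNIV::'d set). (12 * real j * (2 * L * L)) * (2 * L))"
  proof (rule sum_mono)
    fix k
    have "\<bar>Vv f j $ k\<bar> \<le> 12 * real j * (2 * L * L)"
      using component_le_norm_cart[of "Vv f j" k] Vv_bd[of f j] by linarith
    moreover have "\<bar>Af f j $ k $ i\<bar> \<le> 2 * L"
      using component_le_norm_cart[of "Af f j $ k" i] Finite_Cartesian_Product.norm_nth_le[of "Af f j" k] Af_bd2[of f j] by linarith
    ultimately show "\<bar>Vv f j $ k * Af f j $ k $ i\<bar> \<le> (12 * real j * (2 * L * L)) * (2 * L)"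
      unfolding abs_mult by (intro mult_mono) auto
  qed
  finally show ?thesis by simp
qed

lemma Xh_incr: "m \<le> j \<Longrightarrow> norm (Xh f j - Xh f m) \<le> real (j - m) * (s * L * L + s^2 * L)"
proof (induction j rule: dec_induct)
  case base thus ?case by simp
next
  case (step j)
  have eq: "Xh f (Suc j) - Xh f m = (Xh f j - Xh f m) + (s *\<^sub>R (\<sigma> (Xh f j) *v tr (f (Suc j))) + s^2 *\<^sub>R b (Xh f j))"
    unfolding Xh_def s_sq by (simp add: s_def algebra_simps)
  have "norm (Xh f (Suc j) - Xh f m) \<le> norm (Xh f j - Xh f m) + (norm (s *\<^sub>R (\<sigma> (Xh f j) *v tr (f (Suc j)))) + norm (s^2 *\<^sub>R b (Xh f j)))"
    unfolding eq by (rule order_trans[OF norm_triangle_ineq add_left_mono[OF norm_triangle_ineq]])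
  also have "\<dots> \<le> real (j - m) * (s * L * L + s^2 * L) + (s * L * L + s^2 * L)"
  proof (intro add_mono step.IH)
    have "norm (\<sigma> (Xh f j) *v tr (f (Suc j))) \<le> L * L"
      by (rule order_trans[OF norm_mv mult_mono[OF \<sigma>bd tr_bd]]) (use L1 in auto)
    thus "norm (s *\<^sub>R (\<sigma> (Xh f j) *v tr (f (Suc j)))) \<le> s * L * L" using s_pos
      by (simp add: mult.assoc mult_left_mono)
    show "norm (s^2 *\<^sub>R b (Xh f j)) \<le> s^2 * L" using bbd[of "Xh f j"] by (simp add: mult_left_mono)
  qed
  also have "\<dots> = real (Suc j - m) * (s * L * L + s^2 * L)" using step by (simp add: Suc_diff_le algebra_simps)
  finally show ?case .
qed

lemma Xh_kap: "norm (Xh f j - Xh f (kap j)) \<le> \<delta>"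
proof -
  have "norm (Xh f j - Xh f (kap j)) \<le> real (j - kap j) * (s * L * L + s^2 * L)"
    by (rule Xh_incr[OF kap_le])
  also have "\<dots> \<le> real (blk N) * (2 * s * L^2)"
  proof (rule mult_mono)
    show "real (j - kap j) \<le> real (blk N)" using kap_dist[of j] by simp
    have "s^2 * L \<le> s * L * L" using s_pos s_le1 L1
      by (simp add: power2_eq_square mult_mono)
    thus "s * L * L + s^2 * L \<le> 2 * s * L^2" by (simp add: power2_eq_square algebra_simps)
  qed (use s_pos L1 in auto)
  finally show ?thesis unfolding \<delta>_def by (simp add: mult.assoc)
qed

lemma \<delta>_nonneg: "0 \<le> \<delta>" unfolding \<delta>_def using s_pos by simp

lemma Af_bd: "norm (Af f j) \<le> L * \<delta>"
  unfolding Af_def by (rule order_trans[OF \<sigma>lip mult_left_mono[OF Xh_kap]]) (use L1 in auto)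

lemma Dl_bd: "norm (Dl f j) \<le> L * \<delta> * L"
proof -
  have "norm (Dl f j) \<le> norm (Af f j) * norm (tr (f (Suc j)))" unfolding Dl_def by (rule norm_mv)
  also have "\<dots> \<le> L * \<delta> * L" using Af_bd tr_bd L1 \<delta>_nonneg by (intro mult_mono) auto
  finally show ?thesis .
qed

lemma Bd_bd: "norm (Bd f n) \<le> real n * (L * \<delta>)"
proof -
  have "norm (Bd f n) \<le> (\<Sum>j<n. norm (b (Xh f j) - b (Xh f (kap j))))" unfolding Bd_def by (rule norm_sum)
  also have "\<dots> \<le> (\<Sum>j<n. L * \<delta>)"
  proof (rule sum_mono)
    fix j show "norm (b (Xh f j) - b (Xh f (kap j))) \<le> L * \<delta>"
      by (rule order_trans[OF blip mult_left_mono[OF Xh_kap]]) (use L1 in auto)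
  qed
  finally show ?thesis by simp
qed

lemma \<delta>_sq: "\<delta>^2 \<le> 4 * s * L^4"
proof -
  have "\<delta>^2 = 4 * (real (blk N))^2 * s^2 * L^4" unfolding \<delta>_def by (simp add: power_mult_distrib)
  also have "\<dots> \<le> 4 * sqrt (real N) * s^2 * L^4" using blk_sq[of N] s_pos by (intro mult_right_mono) auto
  also have "\<dots> = 4 * s * L^4" using s_sqrtN by (simp add: power2_eq_square algebra_simps)
  finally show ?thesis .
qed

end

context mdl begin

lemma XN_Xh:
  assumes "\<And>l. l \<ge> 1 \<Longrightarrow> norm (\<xi> l w) \<le> L"
  shows "XN \<sigma> b \<xi> x0 N k w = Xh (\<lambda>l. \<xi> l w) k"
  unfolding Xh_def by (rule XN_cong) (use assms in \<open>auto simp: tr_def\<close>)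

lemma D_eq:
  assumes "\<And>l. l \<ge> 1 \<Longrightarrow> norm (\<xi> l w) \<le> L" and "0 \<le> t"
  shows "Xt \<sigma> b \<xi> x0 N t w - Xhat \<sigma> b \<xi> x0 N t w
    = s *\<^sub>R Mm (\<lambda>l. \<xi> l w) (nat \<lfloor>real N * t\<rfloor>) + s^2 *\<^sub>R Bd (\<lambda>l. \<xi> l w) (nat \<lfloor>real N * t\<rfloor>)"
proof -
  let ?f = "\<lambda>l. \<xi> l w" and ?n = "nat \<lfloor>real N * t\<rfloor>"
  have X: "XN \<sigma> b \<xi> x0 N k w = Xh ?f k" for k by (rule XN_Xh[of \<xi> w, OF assms(1)])
  have xi: "tr (?f (Suc j)) = \<xi> (Suc j) w" for j using assms(1)[of "Suc j"] by (simp add: tr_def)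
  have "Xt \<sigma> b \<xi> x0 N t w = x0 + (\<Sum>j<?n. s *\<^sub>R (\<sigma> (Xh ?f j) *v tr (?f (Suc j))) + s^2 *\<^sub>R b (Xh ?f j))"
    unfolding Xt_def by (subst XN_sum) (simp only: X xi s_sq, simp add: s_def)
  moreover have "Xhat \<sigma> b \<xi> x0 N t w = x0 + s *\<^sub>R (\<Sum>j<?n. \<sigma> (Xh ?f (kap j)) *v tr (?f (Suc j)) + s *\<^sub>R b (Xh ?f (kap j)))"
    unfolding Xhat_eq[OF N1 assms(2)] X xi kap_def s_def by simp
  ultimately have "Xt \<sigma> b \<xi> x0 N t w - Xhat \<sigma> b \<xi> x0 N t w =
     (\<Sum>j<?n. s *\<^sub>R (\<sigma> (Xh ?f j) *v tr (?f (Suc j))) + s^2 *\<^sub>R b (Xh ?f j))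
     - (\<Sum>j<?n. s *\<^sub>R (\<sigma> (Xh ?f (kap j)) *v tr (?f (Suc j))) + s^2 *\<^sub>R b (Xh ?f (kap j)))"
    by (simp add: scaleR_sum_right scaleR_add_right power2_eq_square)
  also have "\<dots> = (\<Sum>j<?n. (s *\<^sub>R (\<sigma> (Xh ?f j) *v tr (?f (Suc j))) + s^2 *\<^sub>R b (Xh ?f j))
      - (s *\<^sub>R (\<sigma> (Xh ?f (kap j)) *v tr (?f (Suc j))) + s^2 *\<^sub>R b (Xh ?f (kap j))))"
    by (rule sum_subtractf[symmetric])
  also have "\<dots> = (\<Sum>j<?n. s *\<^sub>R Dl ?f j + s^2 *\<^sub>R (b (Xh ?f j) - b (Xh ?f (kap j))))"
  proof (rule sum.cong[OF refl])
    fix j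
    show "(s *\<^sub>R (\<sigma> (Xh ?f j) *v tr (?f (Suc j))) + s^2 *\<^sub>R b (Xh ?f j))
      - (s *\<^sub>R (\<sigma> (Xh ?f (kap j)) *v tr (?f (Suc j))) + s^2 *\<^sub>R b (Xh ?f (kap j)))
      = s *\<^sub>R Dl ?f j + s^2 *\<^sub>R (b (Xh ?f j) - b (Xh ?f (kap j)))"
      unfolding Dl_def Af_def matrix_vector_mult_diff_rdistrib scaleR_diff_right by simp
  qed
  also have "\<dots> = s *\<^sub>R Mm ?f ?n + s^2 *\<^sub>R Bd ?f ?n"
    unfolding Mm_def Bd_def scaleR_sum_right sum.distrib ..
  finally show ?thesis .
qed

definition "\<Phi> f = 2 * s^2 * (4 * real N * (L * \<delta> * L)^2 + (\<Sum>j<N. inner (Vv f j) (Dl f j)))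
   + 2 * s^4 * (real N * (L * \<delta>))^2"

lemma doob_Mm: "(mxs (Mm f) N)^2 \<le> 4 * real N * (L * \<delta> * L)^2 + (\<Sum>j<N. inner (Vv f j) (Dl f j))"
proof -
  have M0: "Mm f 0 = 0" by (simp add: Mm_def)
  have inc: "Mm f (Suc j) - Mm f j = Dl f j" for j by (simp add: Mm_def)
  have "(mxs (Mm f) N)^2 \<le> (\<Sum>j<N. 4 * (norm (Dl f j))^2 + inner (Vv f j) (Dl f j))"
    using doob_path[of "Mm f" N, OF M0] unfolding inc Vv_def .
  also have "\<dots> \<le> (\<Sum>j<N. 4 * (L * \<delta> * L)^2 + inner (Vv f j) (Dl f j))"
  proof (intro sum_mono add_mono order_refl mult_left_mono)
    fix j show "(norm (Dl f j))^2 \<le> (L * \<delta> * L)^2" using Dl_bd[of f j] by (intro power_mono) auto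
  qed simp
  finally show ?thesis by (simp add: sum.distrib)
qed

lemma path_bound:
  assumes "\<And>l. l \<ge> 1 \<Longrightarrow> norm (\<xi> l w) \<le> L" and "0 \<le> t" "t \<le> 1"
  shows "(norm (Xt \<sigma> b \<xi> x0 N t w - Xhat \<sigma> b \<xi> x0 N t w))^2 \<le> \<Phi> (\<lambda>l. \<xi> l w)"
proof -
  let ?f = "\<lambda>l. \<xi> l w" and ?n = "nat \<lfloor>real N * t\<rfloor>"
  have nN: "?n \<le> N"
  proof -
    have "real N * t \<le> real N" using assms N1 by (simp add: mult_left_le)
    hence "\<lfloor>real N * t\<rfloor> \<le> int N" by linarith
    thus ?thesis by linarith
  qed
  let ?a = "norm (s *\<^sub>R Mm ?f ?n)" and ?c = "norm (s^2 *\<^sub>R Bd ?f ?n)"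
  have de: "Xt \<sigma> b \<xi> x0 N t w - Xhat \<sigma> b \<xi> x0 N t w = s *\<^sub>R Mm ?f ?n + s^2 *\<^sub>R Bd ?f ?n"
    by (rule D_eq[of \<xi> w t, OF assms(1,2)])
  have "(norm (Xt \<sigma> b \<xi> x0 N t w - Xhat \<sigma> b \<xi> x0 N t w))^2 \<le> (?a + ?c)^2"
    unfolding de by (intro power_mono norm_triangle_ineq norm_ge_zero)
  also have "\<dots> \<le> 2 * ?a^2 + 2 * ?c^2"
  proof -
    have "0 \<le> (?a - ?c)^2" by simp
    thus ?thesis by (simp add: power2_eq_square algebra_simps)
  qed
  also have "\<dots> \<le> 2 * (s^2 * (mxs (Mm ?f) N)^2) + 2 * (s^4 * (real N * (L * \<delta>))^2)"
  proof (intro add_mono mult_left_mono)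
    have "norm (Mm ?f ?n) \<le> mxs (Mm ?f) N" by (rule mxs_ge[OF nN])
    hence "(norm (Mm ?f ?n))^2 \<le> (mxs (Mm ?f) N)^2" by (intro power_mono) auto
    thus "?a^2 \<le> s^2 * (mxs (Mm ?f) N)^2" using s_pos by (simp add: power_mult_distrib)
    have "norm (Bd ?f ?n) \<le> real N * (L * \<delta>)"
      by (rule order_trans[OF Bd_bd mult_right_mono]) (use nN L1 \<delta>_nonneg in auto)
    hence "(norm (Bd ?f ?n))^2 \<le> (real N * (L * \<delta>))^2" by (intro power_mono) auto
    thus "?c^2 \<le> s^4 * (real N * (L * \<delta>))^2" using s_pos
      by (simp add: power_mult_distrib power2_eq_square[of "s^2"] flip: power_mult)
  qed auto
  also have "\<dots> \<le> \<Phi> ?f"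
    unfolding \<Phi>_def using doob_Mm[of ?f] s_pos by (simp add: mult_left_mono)
  finally show ?thesis .
qed

end


lemma (in prob_space) key_indep:
  fixes \<xi> :: "nat \<Rightarrow> 'a \<Rightarrow> real^'d" and F :: "(nat \<Rightarrow> real^'d) \<Rightarrow> real" and G :: "real^'d \<Rightarrow> real"
  assumes ind: "indep_vars (\<lambda>_. borel) \<xi> {1..}"
    and F: "F \<in> borel_measurable (PiM {1..j} (\<lambda>_. borel))" and Fb: "\<And>f. \<bar>F f\<bar> \<le> C"
    and G: "G \<in> borel_measurable borel" and Gb: "\<And>v. \<bar>G v\<bar> \<le> C'"
  shows "integrable M (\<lambda>w. F (restrict (\<lambda>l. \<xi> l w) {1..j}) * G (\<xi> (Suc j) w))"
    and "(\<integral>w. F (restrict (\<lambda>l. \<xi> l w) {1..j}) * G (\<xi> (Suc j) w) \<partial>M)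
          = (\<integral>w. F (restrict (\<lambda>l. \<xi> l w) {1..j}) \<partial>M) * (\<integral>w. G (\<xi> (Suc j) w) \<partial>M)"
proof -
  have rv: "\<xi> l \<in> borel_measurable M" if "l \<ge> 1" for l
    using ind that unfolding indep_vars_def by auto
  have iv: "indep_var (PiM {1..j} (\<lambda>_. borel)) (\<lambda>w. restrict (\<lambda>l. \<xi> l w) {1..j})
                      (PiM {Suc j} (\<lambda>_. borel)) (\<lambda>w. restrict (\<lambda>l. \<xi> l w) {Suc j})"
    by (rule indep_var_restrict[OF ind]) auto
  have G': "(\<lambda>g. G (g (Suc j))) \<in> borel_measurable (PiM {Suc j} (\<lambda>_. borel))"
    using measurable_compose[OF measurable_component_singleton[of "Suc j" "{Suc j}" "\<lambda>_. borel"] G] by simp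
  have iv2: "indep_var borel (F \<circ> (\<lambda>w. restrict (\<lambda>l. \<xi> l w) {1..j}))
                       borel ((\<lambda>g. G (g (Suc j))) \<circ> (\<lambda>w. restrict (\<lambda>l. \<xi> l w) {Suc j}))"
    by (rule indep_var_compose[OF iv F G'])
  have e: "((\<lambda>g. G (g (Suc j))) \<circ> (\<lambda>w. restrict (\<lambda>l. \<xi> l w) {Suc j})) = (\<lambda>w. G (\<xi> (Suc j) w))"
    by (simp add: comp_def)
  have iv3: "indep_var borel (\<lambda>w. F (restrict (\<lambda>l. \<xi> l w) {1..j})) borel (\<lambda>w. G (\<xi> (Suc j) w))"
    using iv2 unfolding e by (simp add: comp_def)
  have mr: "(\<lambda>w. restrict (\<lambda>l. \<xi> l w) {1..j}) \<in> measurable M (PiM {1..j} (\<lambda>_. borel))"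
    by (rule measurable_restrict) (use rv in auto)
  have i1: "integrable M (\<lambda>w. F (restrict (\<lambda>l. \<xi> l w) {1..j}))"
    by (rule integrable_const_bound[where B=C]) (use Fb measurable_compose[OF mr F] in auto)
  have i2: "integrable M (\<lambda>w. G (\<xi> (Suc j) w))"
    by (rule integrable_const_bound[where B=C']) (use Gb measurable_compose[OF rv G] in auto)
  show "integrable M (\<lambda>w. F (restrict (\<lambda>l. \<xi> l w) {1..j}) * G (\<xi> (Suc j) w))"
    by (rule indep_var_integrable[OF iv3 i1 i2])
  show "(\<integral>w. F (restrict (\<lambda>l. \<xi> l w) {1..j}) * G (\<xi> (Suc j) w) \<partial>M)
          = (\<integral>w. F (restrict (\<lambda>l. \<xi> l w) {1..j}) \<partial>M) * (\<integral>w. G (\<xi> (Suc j) w) \<partial>M)"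
    by (rule indep_var_lebesgue_integral[OF iv3 i1 i2])
qed

context mdl begin

lemma final_arith:
  "2 * s^2 * (4 * real N * (L * \<delta> * L)^2) + 2 * s^4 * (real N * (L * \<delta>))^2 \<le> 136 * L^8 / sqrt (real N)"
proof -
  have L0: "0 \<le> L" using L1 by simp
  have a: "2 * s^2 * (4 * real N * (L * \<delta> * L)^2) = 8 * L^4 * \<delta>^2"
    using s_N by (simp add: power_mult_distrib algebra_simps)
  have b: "2 * s^4 * (real N * (L * \<delta>))^2 = 2 * L^2 * \<delta>^2"
  proof -
    have "s^4 * (real N)^2 = (s^2 * real N)^2" by (simp add: power_mult_distrib flip: power_mult)
    hence s4: "s^4 * (real N)^2 = 1" using s_N by simp
    have "2 * s^4 * (real N * (L * \<delta>))^2 = 2 * (s^4 * (real N)^2) * (L^2 * \<delta>^2)"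
      by (simp add: power_mult_distrib)
    thus ?thesis unfolding s4 by simp
  qed
  have c: "8 * L^4 * \<delta>^2 \<le> 8 * L^4 * (4 * s * L^4)" using \<delta>_sq by (intro mult_left_mono) auto
  have d: "2 * L^2 * \<delta>^2 \<le> 2 * L^2 * (4 * s * L^4)" using \<delta>_sq by (intro mult_left_mono) auto
  have e: "L^6 \<le> L^8"
  proof -
    have "L^6 * 1 \<le> L^6 * L^2" using L1 by (intro mult_left_mono) (auto simp: one_le_power)
    thus ?thesis by (simp add: power_add[symmetric])
  qed
  have "8 * L^4 * (4 * s * L^4) + 2 * L^2 * (4 * s * L^4) = 32 * s * L^8 + 8 * s * L^6"
    by (simp add: algebra_simps power_add[symmetric])
  also have "\<dots> \<le> 32 * s * L^8 + 8 * s * L^8" using e s_pos by simp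
  also have "\<dots> \<le> 136 * L^8 * s" using s_pos by (simp add: algebra_simps)
  also have "\<dots> = 136 * L^8 / sqrt (real N)" by (simp add: s_def divide_inverse)
  finally show ?thesis using a b c d by linarith
qed

end


theorem lemma3p1:
  fixes M :: "'a measure"
    and \<sigma> :: "real^'d \<Rightarrow> real^'d^'d" and b :: "real^'d \<Rightarrow> real^'d"
    and \<xi> :: "nat \<Rightarrow> 'a \<Rightarrow> real^'d" and x0 :: "real^'d"
    and L :: real and N :: nat
  assumes "prob_space M"
    and "L \<ge> 1"
    and "\<And>x. norm (\<sigma> x) \<le> L" and "\<And>x. norm (b x) \<le> L"
    and "\<And>x y. norm (\<sigma> x - \<sigma> y) \<le> L * norm (x - y)"
    and "\<And>x y. norm (b x - b y) \<le> L * norm (x - y)"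
    and "\<And>n. n \<ge> 1 \<Longrightarrow> \<xi> n \<in> borel_measurable M"
    and "prob_space.indep_vars M (\<lambda>_. borel) \<xi> {1..}"
    and "\<And>n. n \<ge> 1 \<Longrightarrow> distr M borel (\<xi> n) = distr M borel (\<xi> 1)"
    and "\<And>i. prob_space.expectation M (\<lambda>w. \<xi> 1 w $ i) = 0"
    and "\<And>i j. prob_space.expectation M (\<lambda>w. \<xi> 1 w $ i * \<xi> 1 w $ j) = (if i = j then 1 else 0)"
    and "AE w in M. norm (\<xi> 1 w) \<le> L"
    and "N \<ge> 1"
  shows "(\<integral>\<^sup>+ w. (SUP t\<in>{0..1::real}. ennreal ((norm (Xt \<sigma> b \<xi> x0 N t w - Xhat \<sigma> b \<xi> x0 N t w))\<^sup>2)) \<partial>M)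
           \<le> ennreal (136 * L ^ 8 / sqrt (real N))"
proof -
  interpret P: prob_space M by (rule assms(1))
  interpret mdl \<sigma> b L x0 N by unfold_locales (use assms in auto)
  have meas: "(\<lambda>w. \<xi> l w) \<in> borel_measurable M" if "l \<ge> 1" for l using assms(7)[OF that] by simp
  have Sset: "{v \<in> space borel. norm v \<le> L} \<in> sets (borel :: (real^'d) measure)" by measurable
  have AEl: "AE w in M. norm (\<xi> l w) \<le> L" if l: "l \<ge> 1" for l
  proof -
    have m1: "\<xi> 1 \<in> borel_measurable M" and ml: "\<xi> l \<in> borel_measurable M" using assms(7) l by auto
    have a1: "AE v in distr M borel (\<xi> 1). norm v \<le> L" using assms(12) by (subst AE_distr_iff[OF m1 Sset])
    have "AE v in distr M borel (\<xi> l). norm v \<le> L" unfolding assms(9)[OF l] by (rule a1)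
    thus ?thesis by (subst (asm) AE_distr_iff[OF ml Sset])
  qed
  have AEb: "AE w in M. \<forall>l. 1 \<le> l \<longrightarrow> norm (\<xi> l w) \<le> L"
    unfolding AE_all_countable
  proof
    fix l :: nat show "AE w in M. 1 \<le> l \<longrightarrow> norm (\<xi> l w) \<le> L"
    proof (cases "1 \<le> l")
      case True show ?thesis by (rule eventually_mono[OF AEl[OF True]]) simp
    next
      case False show ?thesis by (rule AE_I2) (use False in auto)
    qed
  qed

  have ptw: "AE w in M. (SUP t\<in>{0..1::real}. ennreal ((norm (Xt \<sigma> b \<xi> x0 N t w - Xhat \<sigma> b \<xi> x0 N t w))\<^sup>2))
              \<le> ennreal (\<Phi> (\<lambda>l. \<xi> l w))"
    using AEb
  proof eventually_elim
    case (elim w)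
    show ?case
    proof (rule SUP_least)
      fix t :: real assume "t \<in> {0..1}"
      thus "ennreal ((norm (Xt \<sigma> b \<xi> x0 N t w - Xhat \<sigma> b \<xi> x0 N t w))\<^sup>2) \<le> ennreal (\<Phi> (\<lambda>l. \<xi> l w))"
        by (intro ennreal_leI path_bound) (use elim in auto)
    qed
  qed
  have nonneg: "AE w in M. 0 \<le> \<Phi> (\<lambda>l. \<xi> l w)"
    using AEb
  proof eventually_elim
    case (elim w)
    show ?case by (rule order_trans[OF zero_le_power2 path_bound[of \<xi> w 0]]) (use elim in auto)
  qed

  define I where "I j w = inner (Vv (\<lambda>l. \<xi> l w) j) (Dl (\<lambda>l. \<xi> l w) j)" for j w
  have Imeas: "(\<lambda>w. I j w) \<in> borel_measurable M" for j
    unfolding I_def by (rule innerVD_meas) (use meas in simp)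
  have Ibd: "norm (I j w) \<le> (12 * real j * (2 * L * L)) * (2 * L * L)" for j w
  proof -
    have "norm (I j w) \<le> norm (Vv (\<lambda>l. \<xi> l w) j) * norm (Dl (\<lambda>l. \<xi> l w) j)"
      unfolding I_def real_norm_def by (rule Cauchy_Schwarz_ineq2)
    also have "\<dots> \<le> (12 * real j * (2 * L * L)) * (2 * L * L)"
      by (intro mult_mono Vv_bd Dl_bd2) (use assms(2) in auto)
    finally show ?thesis .
  qed
  have Iint: "integrable M (I j)" for j
    by (rule P.integrable_const_bound[where B="(12 * real j * (2 * L * L)) * (2 * L * L)"])
       (use Ibd Imeas in auto)
  have comp_meas: "(\<lambda>f. if l \<in> {1..j} then f l else 0) \<in> borel_measurable (PiM {1..j} (\<lambda>_. borel :: (real^'d) measure))" for l j :: nat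
  proof (cases "l \<in> {1..j}")
    case True thus ?thesis using measurable_component_singleton[OF True, of "\<lambda>_. borel :: (real^'d) measure"] by simp
  next
    case False
    have e: "(\<lambda>f::nat \<Rightarrow> real^'d. if l \<in> {1..j} then f l else 0) = (\<lambda>f. 0)"
      using False by (intro ext) auto
    show ?thesis unfolding e by simp
  qed
  have EG0: "(\<integral>w. tr (\<xi> (Suc j) w) $ i \<partial>M) = 0" for j i
  proof -
    have G: "(\<lambda>v::real^'d. tr v $ i) \<in> borel_measurable borel" by (rule measurable_compose[OF tr_meas borel_measurable_nth])
    have "(\<integral>w. tr (\<xi> (Suc j) w) $ i \<partial>M) = (\<integral>v. tr v $ i \<partial>distr M borel (\<xi> (Suc j)))"
      by (rule integral_distr[symmetric]) (use assms(7) G in auto)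
    also have "\<dots> = (\<integral>v. tr v $ i \<partial>distr M borel (\<xi> 1))" using assms(9)[of "Suc j"] by simp
    also have "\<dots> = (\<integral>w. tr (\<xi> 1 w) $ i \<partial>M)"
      by (rule integral_distr) (use assms(7) G in auto)
    also have "\<dots> = (\<integral>w. \<xi> 1 w $ i \<partial>M)"
    proof (rule integral_cong_AE)
      show "(\<lambda>w. tr (\<xi> 1 w) $ i) \<in> borel_measurable M" using assms(7)[of 1] G by measurable
      show "(\<lambda>w. \<xi> 1 w $ i) \<in> borel_measurable M" using assms(7)[of 1] by measurable
      show "AE w in M. tr (\<xi> 1 w) $ i = \<xi> 1 w $ i"
        by (rule eventually_mono[OF AEl[of 1]]) (auto simp: tr_def)
    qed
    also have "\<dots> = 0" using assms(10) by simp
    finally show ?thesis .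
  qed
  have I0: "integral\<^sup>L M (I j) = 0" for j
  proof -
    have Fm: "(\<lambda>f. Fi f j i) \<in> borel_measurable (PiM {1..j} (\<lambda>_. borel :: (real^'d) measure))" for i
    proof -
      have "(\<lambda>f. Fi f j i) = (\<lambda>f. Fi (\<lambda>l. if l \<in> {1..j} then f l else 0) j i)"
        by (rule ext, rule Fi_cong) simp
      also have "\<dots> \<in> borel_measurable (PiM {1..j} (\<lambda>_. borel :: (real^'d) measure))"
        by (rule Fi_meas) (rule comp_meas)
      finally show ?thesis .
    qed
    have Gm: "(\<lambda>v::real^'d. tr v $ i) \<in> borel_measurable borel" for i by (rule measurable_compose[OF tr_meas borel_measurable_nth])
    have Gb: "\<bar>tr v $ i\<bar> \<le> L" for v :: "real^'d" and i using component_le_norm_cart[of "tr v" i] tr_bd[of v] by linarith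
    note K = P.key_indep[OF assms(8) Fm Fi_bd Gm Gb]
    have eq: "I j w = (\<Sum>i\<in>UNIV. Fi (restrict (\<lambda>l. \<xi> l w) {1..j}) j i * tr (\<xi> (Suc j) w) $ i)" for w
    proof -
      have "Fi (\<lambda>l. \<xi> l w) j i = Fi (restrict (\<lambda>l. \<xi> l w) {1..j}) j i" for i
        by (rule Fi_cong) simp
      thus ?thesis unfolding I_def inner_split by simp
    qed
    have "integral\<^sup>L M (I j) = (\<integral>w. (\<Sum>i\<in>UNIV. Fi (restrict (\<lambda>l. \<xi> l w) {1..j}) j i * tr (\<xi> (Suc j) w) $ i) \<partial>M)"
      unfolding eq ..
    also have "\<dots> = (\<Sum>i\<in>UNIV. (\<integral>w. Fi (restrict (\<lambda>l. \<xi> l w) {1..j}) j i * tr (\<xi> (Suc j) w) $ i \<partial>M))"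
      by (rule Bochner_Integration.integral_sum) (rule K(1))
    also have "\<dots> = 0" unfolding K(2) EG0 by simp
    finally show ?thesis .
  qed

  define C0 where "C0 = 2 * s^2 * (4 * real N * (L * \<delta> * L)^2) + 2 * s^4 * (real N * (L * \<delta>))^2"
  have Phi_eq: "\<Phi> (\<lambda>l. \<xi> l w) = C0 + 2 * s^2 * (\<Sum>j<N. I j w)" for w
    unfolding \<Phi>_def C0_def I_def by (simp add: algebra_simps)
  have Phi_int: "integrable M (\<lambda>w. \<Phi> (\<lambda>l. \<xi> l w))"
    unfolding Phi_eq using Iint
    by (intro Bochner_Integration.integrable_add Bochner_Integration.integrable_mult_right
        Bochner_Integration.integrable_sum P.integrable_const) auto
  have Phi_integral: "(\<integral>w. \<Phi> (\<lambda>l. \<xi> l w) \<partial>M) = C0"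
  proof -
    have "(\<integral>w. \<Phi> (\<lambda>l. \<xi> l w) \<partial>M) = (\<integral>w. C0 \<partial>M) + (\<integral>w. 2 * s^2 * (\<Sum>j<N. I j w) \<partial>M)"
      unfolding Phi_eq using Iint
      by (intro Bochner_Integration.integral_add Bochner_Integration.integrable_mult_right
        Bochner_Integration.integrable_sum P.integrable_const) auto
    also have "(\<integral>w. 2 * s^2 * (\<Sum>j<N. I j w) \<partial>M) = 2 * s^2 * (\<Sum>j<N. integral\<^sup>L M (I j))"
      using Iint by (simp add: Bochner_Integration.integral_sum)
    finally show ?thesis using I0 by (simp add: P.prob_space)
  qed
  have "(\<integral>\<^sup>+ w. (SUP t\<in>{0..1::real}. ennreal ((norm (Xt \<sigma> b \<xi> x0 N t w - Xhat \<sigma> b \<xi> x0 N t w))\<^sup>2)) \<partial>M)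
        \<le> (\<integral>\<^sup>+ w. ennreal (\<Phi> (\<lambda>l. \<xi> l w)) \<partial>M)"
    by (rule nn_integral_mono_AE[OF ptw])
  also have "\<dots> = ennreal (\<integral>w. \<Phi> (\<lambda>l. \<xi> l w) \<partial>M)"
    by (rule nn_integral_eq_integral[OF Phi_int nonneg])
  also have "\<dots> = ennreal C0" unfolding Phi_integral ..
  also have "\<dots> \<le> ennreal (136 * L ^ 8 / sqrt (real N))"
    unfolding C0_def by (rule ennreal_leI[OF final_arith])
  finally show ?thesis .
qed


end
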